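(* Let $V_\theta$ be a real vector space of finite dimension $D\ge1$ and let $M\subset V_\theta\times[0,1]$ be a dichotomous item response hypersurface whose associated function $f:V_\theta\to[0,1]$ is not constant. Let $w,w'\in V_\theta$, and let $H_w,H_{w'}\subset V_\theta$ be affine hyperplanes (of dimension $D-1$) with $w\in H_w$, $w'\in H_{w'}$, such that $f$ is constant on $H_w$ and constant on $H_{w'}$. Then $H_w$ and $H_{w'}$ are parallel (i.e. they are translates of the same linear subspace).
   Context: A dichotomous item response hypersurface (IRHS) is a $D=\dim V_\theta$ dimensional smooth submanifold $M$ of $V_\theta\times[0,1]$ such that for any two vectors $v,w\in V_\theta$, the intersection of $(w+\mathbb{R}\cdot v)\times[0,1]$ with $M$ is the graph of a monotonic function $w+\mathbb{R}\cdot v\to[0,1]$, where $w+\mathbb{R}\cdot v=\{w+\lambda v:\lambda\in\mathbb{R}\}$. A function $g:w+\mathbb{R}\cdot v\to[0,1]$ is monotonic if either $g(w+\lambda v)\le g(w+\mu v)$ for all $\lambda\le\mu$, or $g(w+\lambda v)\ge g(w+\mu v)$ for all $\lambda\le\mu$. Taking $v=0$ shows $M$ is the graph of a function $f:V_\theta\to[0,1]$, the associated function. *)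

theory Defs
  imports "HOL-Analysis.Analysis"
begin

text \<open>C-infinity smoothness on a set (intended for open sets): f is continuous,
  Frechet differentiable at every point, and every directional derivative
  x -> f' x v is again smooth.\<close>
coinductive smooth_on :: "'a::real_normed_vector set \<Rightarrow> ('a \<Rightarrow> 'b::real_normed_vector) \<Rightarrow> bool" where
  "\<lbrakk> continuous_on S f;
     \<And>x. x \<in> S \<Longrightarrow> (f has_derivative f' x) (at x);
     \<And>v. smooth_on S (\<lambda>x. f' x v) \<rbrakk> \<Longrightarrow> smooth_on S f"

definition smooth_submanifold :: "nat \<Rightarrow> 'e::euclidean_space set \<Rightarrow> bool" where
  "smooth_submanifold k M \<longleftrightarrow>
     (\<forall>p\<in>M. \<exists>U W (\<phi>::'e \<Rightarrow> 'e) \<psi> L.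
        open U \<and> p \<in> U \<and> open W \<and>
        smooth_on U \<phi> \<and> smooth_on W \<psi> \<and> \<phi> ` U = W \<and>
        (\<forall>x\<in>U. \<psi> (\<phi> x) = x) \<and> (\<forall>y\<in>W. \<phi> (\<psi> y) = y) \<and>
        subspace L \<and> dim L = k \<and> \<phi> ` (M \<inter> U) = W \<inter> L)"

definition line_through :: "'a::real_vector \<Rightarrow> 'a \<Rightarrow> 'a set" where
  "line_through w v = {w + t *\<^sub>R v | t. True}"

definition IRHS :: "('a::euclidean_space \<times> real) set \<Rightarrow> bool" where
  "IRHS M \<longleftrightarrow>
     M \<subseteq> UNIV \<times> {0..1} \<and>
     smooth_submanifold DIM('a) M \<and>
     (\<forall>v w. \<exists>g::'a \<Rightarrow> real.
        M \<inter> (line_through w v \<times> {0..1}) = {(x, g x) | x. x \<in> line_through w v} \<and>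
        ((\<forall>s t. s \<le> t \<longrightarrow> g (w + s *\<^sub>R v) \<le> g (w + t *\<^sub>R v)) \<or>
         (\<forall>s t. s \<le> t \<longrightarrow> g (w + s *\<^sub>R v) \<ge> g (w + t *\<^sub>R v))))"

end

theory Submission
  imports Defs
begin

lemma solve2:
  fixes a b :: "'a::euclidean_space"
  assumes "a \<noteq> 0" "\<not>(\<exists>k. b = k *\<^sub>R a)"
  shows "\<exists>p. a \<bullet> p = \<alpha> \<and> b \<bullet> p = \<gamma>"
proof -
  define k where "k = (a \<bullet> b) / (a \<bullet> a)"
  define b' where "b' = b - k *\<^sub>R a"
  have aa: "a \<bullet> a > 0" using assms(1) by simp
  have b'0: "b' \<noteq> 0" using assms(2) unfolding b'_def by (metis eq_iff_diff_eq_0)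
  have ab': "a \<bullet> b' = 0" unfolding b'_def k_def using aa by (simp add: inner_diff_right)
  have bb': "b \<bullet> b' = b' \<bullet> b'"
  proof -
    have "b = b' + k *\<^sub>R a" unfolding b'_def by simp
    then have "b \<bullet> b' = b' \<bullet> b' + k * (a \<bullet> b')" by (metis inner_add_left inner_scaleR_left)
    then show ?thesis using ab' by simp
  qed
  have pos: "b' \<bullet> b' > 0" using b'0 by simp
  define t where "t = (\<gamma> - \<alpha> * (a \<bullet> b) / (a \<bullet> a)) / (b' \<bullet> b')"
  define p where "p = (\<alpha> / (a \<bullet> a)) *\<^sub>R a + t *\<^sub>R b'"
  have "a \<bullet> p = \<alpha>" unfolding p_def using aa ab' by (simp add: inner_add_right)
  moreover have "b \<bullet> p = \<gamma>" unfolding p_def t_def using aa pos bb'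
    by (simp add: inner_add_right inner_commute field_simps)
  ultimately show ?thesis by blast
qed

lemma hyp_translate:
  fixes a :: "'a::euclidean_space"
  assumes "a \<noteq> 0"
  shows "{x. a \<bullet> x = \<alpha>} = (\<lambda>x. (\<alpha> / (a \<bullet> a)) *\<^sub>R a + x) ` {x. a \<bullet> x = 0}"
proof -
  have aa: "a \<bullet> a \<noteq> 0" using assms by simp
  show ?thesis
  proof (intro set_eqI iffI)
    fix x assume "x \<in> {x. a \<bullet> x = \<alpha>}"
    then have "x = (\<alpha> / (a \<bullet> a)) *\<^sub>R a + (x - (\<alpha> / (a \<bullet> a)) *\<^sub>R a)"
      and "a \<bullet> (x - (\<alpha> / (a \<bullet> a)) *\<^sub>R a) = 0" using aa by (auto simp: inner_diff_right)
    then show "x \<in> (\<lambda>x. (\<alpha> / (a \<bullet> a)) *\<^sub>R a + x) ` {x. a \<bullet> x = 0}" by blast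
  next
    fix x assume "x \<in> (\<lambda>x. (\<alpha> / (a \<bullet> a)) *\<^sub>R a + x) ` {x. a \<bullet> x = 0}"
    then show "x \<in> {x. a \<bullet> x = \<alpha>}" using aa by (auto simp: inner_add_right)
  qed
qed

lemma line_mid:
  fixes M :: "('a::euclidean_space \<times> real) set" and f :: "'a \<Rightarrow> real"
  assumes "IRHS M" "M = {(x, f x) | x. True}" "f p = c" "f q = c"
  shows "f ((1/2) *\<^sub>R (p + q)) = c"
proof -
  obtain g :: "'a \<Rightarrow> real" where g:
    "M \<inter> (line_through p (q - p) \<times> {0..1}) = {(x, g x) | x. x \<in> line_through p (q - p)}"
    and mono: "(\<forall>s t. s \<le> t \<longrightarrow> g (p + s *\<^sub>R (q-p)) \<le> g (p + t *\<^sub>R (q-p))) \<or>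
         (\<forall>s t. s \<le> t \<longrightarrow> g (p + s *\<^sub>R (q-p)) \<ge> g (p + t *\<^sub>R (q-p)))"
    using assms(1) unfolding IRHS_def by blast
  have sub: "M \<subseteq> UNIV \<times> {0..1}" using assms(1) unfolding IRHS_def by blast
  have fg: "f (p + s *\<^sub>R (q-p)) = g (p + s *\<^sub>R (q-p))" for s
  proof -
    let ?x = "p + s *\<^sub>R (q-p)"
    have xl: "?x \<in> line_through p (q - p)" unfolding line_through_def by blast
    have "(?x, f ?x) \<in> M" using assms(2) by blast
    then have "f ?x \<in> {0..1}" using sub by blast
    with xl \<open>(?x, f ?x) \<in> M\<close> have "(?x, f ?x) \<in> {(x, g x) | x. x \<in> line_through p (q - p)}"
      using g by blast
    then show ?thesis by auto
  qed
  have e0: "p + 0 *\<^sub>R (q-p) = p" by simp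
  have e1: "p + 1 *\<^sub>R (q-p) = q" by simp
  have eh: "p + (1/2) *\<^sub>R (q-p) = (1/2) *\<^sub>R (p + q)"
  proof -
    have "p = (1/2 + 1/2) *\<^sub>R p" by simp
    also have "\<dots> = (1/2) *\<^sub>R p + (1/2) *\<^sub>R p" by (rule scaleR_left_distrib)
    finally have "p + (1/2) *\<^sub>R (q-p) = (1/2) *\<^sub>R p + (1/2) *\<^sub>R p + ((1/2) *\<^sub>R q - (1/2) *\<^sub>R p)"
      by (simp add: scaleR_diff_right)
    also have "\<dots> = (1/2) *\<^sub>R (p + q)" by (simp add: scaleR_add_right)
    finally show ?thesis .
  qed
  have A: "g p = c" "g q = c" using fg[of 0] fg[of 1] assms(3,4) by simp_all
  define m where "m = g (p + (1/2) *\<^sub>R (q-p))"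
  from mono have "(g (p + 0 *\<^sub>R (q-p)) \<le> m \<and> m \<le> g (p + 1 *\<^sub>R (q-p)))
     \<or> (g (p + 0 *\<^sub>R (q-p)) \<ge> m \<and> m \<ge> g (p + 1 *\<^sub>R (q-p)))"
  proof
    assume h: "\<forall>s t. s \<le> t \<longrightarrow> g (p + s *\<^sub>R (q-p)) \<le> g (p + t *\<^sub>R (q-p))"
    show ?thesis using h[rule_format, of 0 "1/2"] h[rule_format, of "1/2" 1] by (simp add: m_def)
  next
    assume h: "\<forall>s t. s \<le> t \<longrightarrow> g (p + s *\<^sub>R (q-p)) \<ge> g (p + t *\<^sub>R (q-p))"
    show ?thesis using h[rule_format, of 0 "1/2"] h[rule_format, of "1/2" 1] by (simp add: m_def)
  qed
  then have "m = c" using A by (simp only: e0 e1) linarith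
  then have "g ((1/2) *\<^sub>R (p + q)) = c" unfolding m_def eh .
  then show ?thesis using fg[of "1/2"] eh by simp
qed

theorem lemma5:
  fixes M :: "('a::euclidean_space \<times> real) set"
    and f :: "'a \<Rightarrow> real"
    and w w' :: 'a
    and H H' :: "'a set"
  assumes "IRHS M"
    and "M = {(x, f x) | x. True}"
    and "\<not> (\<exists>c. \<forall>x. f x = c)"
    and "affine H" and "aff_dim H = int DIM('a) - 1" and "w \<in> H"
    and "affine H'" and "aff_dim H' = int DIM('a) - 1" and "w' \<in> H'"
    and "\<exists>c. \<forall>x\<in>H. f x = c"
    and "\<exists>c. \<forall>x\<in>H'. f x = c"
  shows "\<exists>L. subspace L \<and> (\<exists>a. H = (\<lambda>x. a + x) ` L) \<and> (\<exists>b. H' = (\<lambda>x. b + x) ` L)"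
proof -
  obtain a \<alpha> where a: "a \<noteq> 0" "H = {x. a \<bullet> x = \<alpha>}"
    proof -
    have e: "affine hull H = H" using assms(4) by simp
    have "\<exists>a b. a \<noteq> 0 \<and> affine hull H = {x. a \<bullet> x = b}"
      using aff_dim_eq_hyperplane[of H] assms(5) by simp
    then show ?thesis using that unfolding e by blast
  qed
  obtain b \<beta> where b: "b \<noteq> 0" "H' = {x. b \<bullet> x = \<beta>}"
    proof -
    have e: "affine hull H' = H'" using assms(7) by simp
    have "\<exists>a b. a \<noteq> 0 \<and> affine hull H' = {x. a \<bullet> x = b}"
      using aff_dim_eq_hyperplane[of H'] assms(8) by simp
    then show ?thesis using that unfolding e by blast
  qed
  obtain c1 where c1: "\<forall>x\<in>H. f x = c1" using assms(10) by blast
  obtain c2 where c2: "\<forall>x\<in>H'. f x = c2" using assms(11) by blast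
  show ?thesis
  proof (cases "\<exists>k. b = k *\<^sub>R a")
    case True
    then obtain k where k: "b = k *\<^sub>R a" by blast
    with b(1) have k0: "k \<noteq> 0" by auto
    have "H' = {x. a \<bullet> x = \<beta> / k}" unfolding b(2) k using k0 by (auto simp: field_simps)
    then show ?thesis using hyp_translate[OF a(1), of \<alpha>] hyp_translate[OF a(1), of "\<beta>/k"] a(2)
      by (intro exI[of _ "{x. a \<bullet> x = 0}"]) (auto simp: subspace_def inner_add_right)
  next
    case False
    obtain r where r: "a \<bullet> r = \<alpha>" "b \<bullet> r = \<beta>" using solve2[OF a(1) False] by blast
    have "c1 = c2" using c1 c2 r a(2) b(2) by auto
    have "f x = c1" for x
    proof -
      obtain y where y: "a \<bullet> y = \<alpha>" "b \<bullet> y = 2 * (b \<bullet> x) - \<beta>" using solve2[OF a(1) False] by blast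
      define z where "z = 2 *\<^sub>R x - y"
      have "b \<bullet> z = \<beta>" unfolding z_def using y by (simp add: inner_diff_right)
      then have "f z = c1" using c2 b(2) \<open>c1 = c2\<close> by auto
      moreover have "f y = c1" using y c1 a(2) by auto
      ultimately have "f ((1/2) *\<^sub>R (y + z)) = c1" using line_mid[OF assms(1,2)] by blast
      moreover have "(1/2) *\<^sub>R (y + z) = x" unfolding z_def by (simp add: algebra_simps)
      ultimately show ?thesis by simp
    qed
    then show ?thesis using assms(3) by blast
  qed
qed

end
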